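(* Let $n\in\mathbb N$ be such that $n+1$ is an Hadamard number. Then there exists a regular $n$-dimensional simplex $S\subset Q_n$ with the following properties: (1) $\mathrm{ver}(S)\subset \mathrm{ver}(Q_n)$; (2) $\xi_n=\xi(S)=\alpha(S)=n$; (3) $d_1(S)=\dots=d_n(S)=1$; (4) the simplex $nS$ is circumscribed around $Q_n$ in such a way that each $(n-1)$-dimensional face of $nS$ contains exactly one vertex of $Q_n$.
   Context: $Q_n=[0,1]^n$. An Hadamard matrix of order $m$ is an $m\times m$ matrix $H$ with entries $\pm1$ satisfying $H^{-1}=\frac1m H^T$; $m$ is an Hadamard number if such a matrix exists. For a convex body $\Omega\subset\mathbb R^n$ (compact convex set with nonempty interior) and $\sigma>0$, $\sigma\Omega$ denotes the image of $\Omega$ under the homothety with center at the center of gravity of $\Omega$ and ratio $\sigma$. For convex bodies $\Omega_1,\Omega_2$, $\xi(\Omega_1;\Omega_2)$ is the minimal $\sigma\ge1$ with $\Omega_1\subset\sigma\Omega_2$, and $\alpha(\Omega_1;\Omega_2)$ is the minimal $\sigma>0$ such that $\Omega_1$ is contained in a translate of $\sigma\Omega_2$. For a simplex $S$, $\xi(S):=\xi(Q_n;S)$, $\alpha(S):=\alpha(Q_n;S)$, and $\xi_n:=\min\{\xi(S): S\subset Q_n \text{ a nondegenerate } n\text{-dimensional simplex}\}$. The $i$th axial diameter $d_i(\Omega)$ is the maximal length of a segment contained in $\Omega$ and parallel to the $x_i$-axis. A simplex is circumscribed around a convex body $\Omega$ if $\Omega\subset S$ and each $(n-1)$-dimensional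 face of $S$ contains a point of $\Omega$. $\mathrm{ver}(\cdot)$ denotes the vertex set of a polytope. *)

theory Defs
  imports "HOL-Analysis.Analysis"
begin

text \<open>Hadamard number: there is an m x m matrix H (indices 0..<m) with entries +-1
  and H^{-1} = (1/m) H^T, i.e. H H^T = m I and H^T H = m I.\<close>
definition hadamard_number :: "nat \<Rightarrow> bool" where
  "hadamard_number m \<longleftrightarrow> (\<exists>H :: nat \<Rightarrow> nat \<Rightarrow> real.
     (\<forall>i<m. \<forall>j<m. H i j = 1 \<or> H i j = -1) \<and>
     (\<forall>i<m. \<forall>k<m. (\<Sum>j<m. H i j * H k j) = (if i = k then real m else 0)) \<and>
     (\<forall>i<m. \<forall>k<m. (\<Sum>j<m. H j i * H j k) = (if i = k then real m else 0)))"

definition unit_cube :: "(real ^ 'n) set" where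
  "unit_cube = {x. \<forall>i. 0 \<le> x $ i \<and> x $ i \<le> 1}"

definition ver :: "(real ^ 'n) set \<Rightarrow> (real ^ 'n) set" where
  "ver P = {v. v extreme_point_of P}"

definition nondeg_simplex :: "(real ^ 'n) set \<Rightarrow> bool" where
  "nondeg_simplex S \<longleftrightarrow> (\<exists>V. finite V \<and> card V = CARD('n) + 1 \<and> \<not> affine_dependent V \<and> S = convex hull V)"

definition regular_simplex :: "(real ^ 'n) set \<Rightarrow> bool" where
  "regular_simplex S \<longleftrightarrow> nondeg_simplex S \<and>
     (\<exists>d. \<forall>u\<in>ver S. \<forall>v\<in>ver S. u \<noteq> v \<longrightarrow> dist u v = d)"

definition center_of_gravity :: "(real ^ 'n) set \<Rightarrow> real ^ 'n" where
  "center_of_gravity \<Omega> = (1 / measure lebesgue \<Omega>) *\<^sub>R integral \<Omega> (\<lambda>x. x)"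

definition homot :: "real \<Rightarrow> (real ^ 'n) set \<Rightarrow> (real ^ 'n) set" where
  "homot \<sigma> \<Omega> = (\<lambda>x. center_of_gravity \<Omega> + \<sigma> *\<^sub>R (x - center_of_gravity \<Omega>)) ` \<Omega>"

definition xi_rel :: "(real ^ 'n) set \<Rightarrow> (real ^ 'n) set \<Rightarrow> real" where
  "xi_rel \<Omega>1 \<Omega>2 = Inf {\<sigma>. \<sigma> \<ge> 1 \<and> \<Omega>1 \<subseteq> homot \<sigma> \<Omega>2}"

definition alpha_rel :: "(real ^ 'n) set \<Rightarrow> (real ^ 'n) set \<Rightarrow> real" where
  "alpha_rel \<Omega>1 \<Omega>2 = Inf {\<sigma>. \<sigma> > 0 \<and> (\<exists>t. \<Omega>1 \<subseteq> (\<lambda>x. t + x) ` homot \<sigma> \<Omega>2)}"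

definition xi_simplex :: "(real ^ 'n) set \<Rightarrow> real" where
  "xi_simplex S = xi_rel (unit_cube :: (real ^ 'n) set) S"

definition alpha_simplex :: "(real ^ 'n) set \<Rightarrow> real" where
  "alpha_simplex S = alpha_rel (unit_cube :: (real ^ 'n) set) S"

definition xi_n :: "'n::finite itself \<Rightarrow> real" where
  "xi_n _ = Inf {xi_simplex S | S :: (real ^ 'n) set. nondeg_simplex S \<and> S \<subseteq> unit_cube}"

definition axial_diam :: "'n \<Rightarrow> (real ^ 'n) set \<Rightarrow> real" where
  "axial_diam i \<Omega> = Sup {dist a b | a b. closed_segment a b \<subseteq> \<Omega> \<and> (\<forall>j. j \<noteq> i \<longrightarrow> a $ j = b $ j)}"

definition circumscribed :: "(real ^ 'n) set \<Rightarrow> (real ^ 'n) set \<Rightarrow> bool" where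
  "circumscribed S \<Omega> \<longleftrightarrow> \<Omega> \<subseteq> S \<and> (\<forall>F. F facet_of S \<longrightarrow> F \<inter> \<Omega> \<noteq> {})"

end

theory Submission
  imports Defs
begin

definition bc :: "(real^'n) set \<Rightarrow> real^'n \<Rightarrow> real^'n \<Rightarrow> real" where
  "bc V x = (SOME u. sum u V = 1 \<and> (\<Sum>v\<in>V. u v *\<^sub>R v) = x)"

lemma count_upper:
  fixes t :: real and N :: nat
  assumes "0 \<le> t" "t \<le> 1" "N > 0"
  shows "real N * t \<le> (\<Sum>i<N. if real i / real N \<le> t then 1 else 0)"
proof -
  define k where "k = nat \<lfloor>real N * t\<rfloor>"
  have iff: "real i / real N \<le> t \<longleftrightarrow> i \<le> k" for i
  proof -
    have "real i / real N \<le> t \<longleftrightarrow> real i \<le> real N * t"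
      using assms(3) by (simp add: divide_le_eq mult.commute)
    also have "\<dots> \<longleftrightarrow> int i \<le> \<lfloor>real N * t\<rfloor>" by (simp add: le_floor_iff)
    also have "\<dots> \<longleftrightarrow> i \<le> k"
    proof -
      have "0 \<le> \<lfloor>real N * t\<rfloor>" using assms by simp
      then show ?thesis unfolding k_def by (simp add: le_nat_iff)
    qed
    finally show ?thesis .
  qed
  have "{i. i < N \<and> i \<le> k} = {..<min N (Suc k)}" by auto
  then have "(\<Sum>i<N. if real i / real N \<le> t then 1 else 0::real) = real (min N (Suc k))"
    by (simp add: iff sum.If_cases Int_def)
  moreover have "real N * t \<le> real (min N (Suc k))"
  proof -
    have "real N * t \<le> real N" using assms by (simp add: mult_left_le)
    moreover have "real N * t < real (Suc k)"
      unfolding k_def using assms by (simp add: mult_nonneg_nonneg) linarith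
    ultimately show ?thesis by (simp add: min_def)
  qed
  ultimately show ?thesis by simp
qed

lemma count_lower:
  fixes t :: real and N :: nat
  assumes "0 \<le> t" "t \<le> 1" "N > 0"
  shows "(\<Sum>i\<in>{1..<N}. if real i / real N \<le> t then 1 else 0) \<le> real N * t"
proof -
  define k where "k = nat \<lfloor>real N * t\<rfloor>"
  have iff: "real i / real N \<le> t \<longleftrightarrow> i \<le> k" for i
  proof -
    have "real i / real N \<le> t \<longleftrightarrow> real i \<le> real N * t"
      using assms(3) by (simp add: divide_le_eq mult.commute)
    also have "\<dots> \<longleftrightarrow> int i \<le> \<lfloor>real N * t\<rfloor>" by (simp add: le_floor_iff)
    also have "\<dots> \<longleftrightarrow> i \<le> k"
    proof -
      have "0 \<le> \<lfloor>real N * t\<rfloor>" using assms by simp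
      then show ?thesis unfolding k_def by (simp add: le_nat_iff)
    qed
    finally show ?thesis .
  qed
  have "(\<Sum>i\<in>{1..<N}. if real i / real N \<le> t then 1 else 0::real) = real (card ({1..<N} \<inter> {i. i \<le> k}))"
    by (simp add: iff sum.If_cases)
  also have "\<dots> \<le> real (card {1..k})"
    by (intro of_nat_mono card_mono) auto
  also have "\<dots> \<le> real N * t"
    unfolding k_def using assms by (simp add: mult_nonneg_nonneg)
  finally show ?thesis .
qed

lemma cont_integrable_compact:
  fixes f :: "'a::euclidean_space \<Rightarrow> 'b::euclidean_space"
  assumes "continuous_on UNIV f" "compact S"
  shows "f integrable_on S"
proof -
  obtain a where a: "S \<subseteq> cbox (-a) a"
    using bounded_subset_cbox_symmetric compact_imp_bounded[OF assms(2)] by blast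
  have "f absolutely_integrable_on cbox (-a) a"
    by (rule absolutely_integrable_continuous) (rule continuous_on_subset[OF assms(1)], simp)
  then have "f absolutely_integrable_on S"
    by (rule set_integrable_subset) (use a lmeasurable_compact[OF assms(2)] in auto)
  then show ?thesis using set_lebesgue_integral_eq_integral(1) by blast
qed

context
  fixes V :: "(real^'n) set"
  assumes fin: "finite V" and ind: "\<not> affine_dependent V" and cardV: "card V = CARD('n) + 1"
begin

lemma aff_UNIV: "affine hull V = UNIV"
proof -
  have "aff_dim V = int CARD('n)"
    using aff_dim_affine_independent[OF ind] cardV by simp
  then show ?thesis by (intro affine_hull_UNIV) simp
qed

lemma bc_ex: "sum (bc V x) V = 1 \<and> (\<Sum>v\<in>V. bc V x v *\<^sub>R v) = x"
proof -
  have "x \<in> affine hull V" using aff_UNIV by simp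
  then have "\<exists>u. sum u V = 1 \<and> (\<Sum>v\<in>V. u v *\<^sub>R v) = x"
    using affine_hull_finite[OF fin] by auto
  then show ?thesis unfolding bc_def by (rule someI_ex)
qed

lemma bc_sum: "sum (bc V x) V = 1" using bc_ex by blast
lemma bc_rep: "(\<Sum>v\<in>V. bc V x v *\<^sub>R v) = x" using bc_ex by blast

lemma bc_unique:
  assumes "sum u V = 1" "(\<Sum>v\<in>V. u v *\<^sub>R v) = x" "v \<in> V"
  shows "u v = bc V x v"
proof -
  define U where "U = (\<lambda>w. u w - bc V x w)"
  have "sum U V = 0" using assms(1) bc_sum by (simp add: U_def sum_subtractf)
  moreover have "(\<Sum>w\<in>V. U w *\<^sub>R w) = 0"
    using assms(2) bc_rep[of x] by (simp add: U_def scaleR_diff_left sum_subtractf)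
  ultimately have "\<not> (\<exists>w\<in>V. U w \<noteq> 0)"
    using ind affine_dependent_explicit_finite[OF fin] by blast
  then show ?thesis using assms(3) by (auto simp: U_def)
qed

lemma bc_affine:
  assumes "v \<in> V"
  shows "bc V ((1-s) *\<^sub>R x + s *\<^sub>R y) v = (1-s) * bc V x v + s * bc V y v"
proof -
  have "(\<lambda>w. (1-s) * bc V x w + s * bc V y w) v = bc V ((1-s) *\<^sub>R x + s *\<^sub>R y) v"
  proof (rule bc_unique[OF _ _ assms])
    show "(\<Sum>w\<in>V. (1 - s) * bc V x w + s * bc V y w) = 1"
      by (simp add: sum.distrib sum_distrib_left[symmetric] bc_sum)
    show "(\<Sum>w\<in>V. ((1 - s) * bc V x w + s * bc V y w) *\<^sub>R w) = (1 - s) *\<^sub>R x + s *\<^sub>R y"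
    proof -
      have "(\<Sum>w\<in>V. ((1 - s) * bc V x w) *\<^sub>R w) = (1-s) *\<^sub>R (\<Sum>w\<in>V. bc V x w *\<^sub>R w)"
        by (simp add: scaleR_sum_right)
      then have a: "(\<Sum>w\<in>V. ((1 - s) * bc V x w) *\<^sub>R w) = (1-s) *\<^sub>R x"
        using bc_rep[of x] by simp
      have "(\<Sum>w\<in>V. (s * bc V y w) *\<^sub>R w) = s *\<^sub>R (\<Sum>w\<in>V. bc V y w *\<^sub>R w)"
        by (simp add: scaleR_sum_right)
      then have b: "(\<Sum>w\<in>V. (s * bc V y w) *\<^sub>R w) = s *\<^sub>R y"
        using bc_rep[of y] by simp
      show ?thesis by (simp add: scaleR_add_left sum.distrib a b)
    qed
  qed
  then show ?thesis by simp
qed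

lemma bc_vertex:
  assumes "w \<in> V" "v \<in> V"
  shows "bc V w v = (if v = w then 1 else 0)"
proof -
  have "(\<lambda>z. if z = w then 1 else 0) v = bc V w v"
  proof (rule bc_unique[OF _ _ assms(2)])
    show "(\<Sum>z\<in>V. if z = w then 1 else 0::real) = 1" using assms(1) fin by simp
    show "(\<Sum>z\<in>V. (if z = w then 1 else 0) *\<^sub>R z) = w" using assms(1) fin
      by (simp add: if_distrib[of "\<lambda>c. c *\<^sub>R _"] cong: if_cong)
  qed
  then show ?thesis by simp
qed

lemma bc_scale: "v \<in> V \<Longrightarrow> bc V (c *\<^sub>R x) v = (1 - c) * bc V 0 v + c * bc V x v"
  using bc_affine[of v c 0 x] by simp

lemma bc_linear: "v \<in> V \<Longrightarrow> linear (\<lambda>x. bc V x v - bc V 0 v)"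
proof (rule linearI)
  fix x y :: "real^'n" assume v: "v \<in> V"
  have eq: "(1 - 1/2) *\<^sub>R (2 *\<^sub>R x) + (1/2) *\<^sub>R (2 *\<^sub>R y) = x + y"
    by (simp add: vec_eq_iff)
  have "bc V (x + y) v = (1 - 1/2) * bc V (2 *\<^sub>R x) v + (1/2) * bc V (2 *\<^sub>R y) v"
    using bc_affine[OF v, of "1/2" "2 *\<^sub>R x" "2 *\<^sub>R y"] unfolding eq .
  then show "bc V (x + y) v - bc V 0 v = bc V x v - bc V 0 v + (bc V y v - bc V 0 v)"
    using bc_scale[OF v, of 2] by (simp add: field_simps)
next
  fix c and x :: "real^'n" assume v: "v \<in> V"
  show "bc V (c *\<^sub>R x) v - bc V 0 v = c *\<^sub>R (bc V x v - bc V 0 v)"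
    using bc_scale[OF v] by (simp add: algebra_simps)
qed

lemma bc_cont: "v \<in> V \<Longrightarrow> continuous_on UNIV (\<lambda>x. bc V x v)"
proof -
  assume v: "v \<in> V"
  have "bounded_linear (\<lambda>x. bc V x v - bc V 0 v)"
    using bc_linear[OF v] linear_conv_bounded_linear by blast
  then have c1: "continuous_on UNIV (\<lambda>x. bc V x v - bc V 0 v)"
    by (rule linear_continuous_on)
  have "continuous_on UNIV (\<lambda>x. (bc V x v - bc V 0 v) + bc V 0 v)"
    by (intro continuous_on_add c1 continuous_on_const)
  then show ?thesis by simp
qed

lemma conv_bc: "convex hull V = {x. \<forall>v\<in>V. 0 \<le> bc V x v}"
proof (intro set_eqI iffI)
  fix x assume "x \<in> convex hull V"
  then obtain u where u: "\<forall>v\<in>V. 0 \<le> u v" "sum u V = 1" "(\<Sum>v\<in>V. u v *\<^sub>R v) = x"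
    using convex_hull_finite[OF fin] by auto
  then show "x \<in> {x. \<forall>v\<in>V. 0 \<le> bc V x v}" using bc_unique[OF u(2,3)] by auto
next
  fix x assume "x \<in> {x. \<forall>v\<in>V. 0 \<le> bc V x v}"
  then show "x \<in> convex hull V"
    using convex_hull_finite[OF fin] bc_sum bc_rep by auto
qed

lemma conv_minus_bc:
  assumes w: "w \<in> V"
  shows "convex hull (V - {w}) = {x. (\<forall>v\<in>V. 0 \<le> bc V x v) \<and> bc V x w = 0}"
proof (intro set_eqI iffI)
  fix x assume "x \<in> convex hull (V - {w})"
  then obtain u where u: "\<forall>v\<in>V-{w}. 0 \<le> u v" "sum u (V-{w}) = 1" "(\<Sum>v\<in>V-{w}. u v *\<^sub>R v) = x"
    using convex_hull_finite[of "V - {w}"] fin by auto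
  define u' where "u' = (\<lambda>v. if v = w then 0 else u v)"
  have s1: "sum u' V = 1"
    using u(2) w fin by (simp add: u'_def sum.remove[OF fin w] sum.If_cases Diff_eq Int_commute)
  have s2: "(\<Sum>v\<in>V. u' v *\<^sub>R v) = x"
  proof -
    have "(\<Sum>v\<in>V. u' v *\<^sub>R v) = u' w *\<^sub>R w + (\<Sum>v\<in>V-{w}. u' v *\<^sub>R v)"
      by (rule sum.remove[OF fin w])
    also have "\<dots> = (\<Sum>v\<in>V-{w}. u v *\<^sub>R v)"
      by (auto simp: u'_def intro!: sum.cong)
    finally show ?thesis using u(3) by simp
  qed
  have "\<forall>v\<in>V. 0 \<le> bc V x v"
    using bc_unique[OF s1 s2] u(1) by (metis Diff_iff empty_iff insert_iff order_refl u'_def)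
  moreover have "bc V x w = 0" using bc_unique[OF s1 s2 w] by (simp add: u'_def)
  ultimately show "x \<in> {x. (\<forall>v\<in>V. 0 \<le> bc V x v) \<and> bc V x w = 0}" by simp
next
  fix x assume x: "x \<in> {x. (\<forall>v\<in>V. 0 \<le> bc V x v) \<and> bc V x w = 0}"
  have "sum (bc V x) (V - {w}) = 1"
    using sum.remove[OF fin w, of "bc V x"] x bc_sum by simp
  moreover have "(\<Sum>v\<in>V-{w}. bc V x v *\<^sub>R v) = x"
    using sum.remove[OF fin w, of "\<lambda>v. bc V x v *\<^sub>R v"] x bc_rep by simp
  ultimately show "x \<in> convex hull (V - {w})"
    using convex_hull_finite[of "V - {w}"] fin x by auto
qed

lemma L_expand:
  assumes v: "v \<in> V"
  shows "bc V x v - bc V 0 v = (\<Sum>i\<in>UNIV. x$i * (bc V (axis i 1) v - bc V 0 v))"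
proof -
  have lin: "linear (\<lambda>x. bc V x v - bc V 0 v)" by (rule bc_linear[OF v])
  have "x = (\<Sum>i\<in>UNIV. x$i *\<^sub>R axis i 1)"
    using basis_expansion[of x] by (simp add: scalar_mult_eq_scaleR)
  then have "bc V x v - bc V 0 v = bc V (\<Sum>i\<in>UNIV. x$i *\<^sub>R axis i 1) v - bc V 0 v" by simp
  also have "\<dots> = (\<Sum>i\<in>UNIV. x$i * (bc V (axis i 1) v - bc V 0 v))"
    using linear_sum[OF lin, of "\<lambda>i. x$i *\<^sub>R axis i 1" UNIV] linear_scale[OF lin]
    by (simp add: o_def)
  finally show ?thesis .
qed

lemma L_add_scale:
  assumes v: "v \<in> V"
  shows "bc V (a + c *\<^sub>R y) v - bc V 0 v = (bc V a v - bc V 0 v) + c * (bc V y v - bc V 0 v)"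
proof -
  have lin: "linear (\<lambda>x. bc V x v - bc V 0 v)" by (rule bc_linear[OF v])
  show ?thesis using linear_add[OF lin, of a "c *\<^sub>R y"] linear_scale[OF lin, of c y] by simp
qed

lemma lower_bound:
  assumes sub: "convex hull V \<subseteq> unit_cube" and sig: "\<sigma> > 0"
    and cont: "unit_cube \<subseteq> (\<lambda>x. a + \<sigma> *\<^sub>R x) ` (convex hull V)"
  shows "real CARD('n) \<le> \<sigma>"
proof -
  define L where "L v x = bc V x v - bc V 0 v" for v x
  define d where "d v i = L v (axis i 1)" for v i
  have Lsum: "(\<Sum>v\<in>V. L v x) = 0" for x
    by (simp add: L_def sum_subtractf bc_sum)
  have Lrep: "(\<Sum>v\<in>V. L v x *\<^sub>R v) = x" for x
    by (simp add: L_def scaleR_diff_left sum_subtractf bc_rep)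
  have Vc: "0 \<le> v$i \<and> v$i \<le> 1" if "v \<in> V" for v i
    using sub hull_subset[of V convex] that unfolding unit_cube_def by blast
  have key: "(\<Sum>v\<in>V. min (d v i) 0) \<le> -1" for i
  proof -
    have "1 = (\<Sum>v\<in>V. L v (axis i 1) *\<^sub>R v) $ i" using Lrep[of "axis i 1"] by simp
    also have "\<dots> = (\<Sum>v\<in>V. d v i * v $ i)" by (simp add: d_def)
    also have "\<dots> \<le> (\<Sum>v\<in>V. d v i - min (d v i) 0)"
    proof (rule sum_mono)
      fix v assume "v \<in> V"
      then have "0 \<le> v$i" "v$i \<le> 1" using Vc by auto
      then show "d v i * v $ i \<le> d v i - min (d v i) 0"
        by (cases "d v i < 0") (auto simp: mult_le_cancel_left1 mult_nonneg_nonneg mult_nonpos_nonneg mult_left_le)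
    qed
    also have "\<dots> = - (\<Sum>v\<in>V. min (d v i) 0)"
      using Lsum[of "axis i 1"] by (simp add: sum_subtractf d_def)
    finally show ?thesis by simp
  qed
  define q where "q v = (\<chi> i. if d v i < 0 then 1 else (0::real))" for v
  have Lq: "L v (q v) = (\<Sum>i\<in>UNIV. min (d v i) 0)" if "v \<in> V" for v
    using L_expand[OF that, of "q v"] unfolding L_def[symmetric] d_def[symmetric]
    by (auto simp: q_def intro!: sum.cong)
  have ineq: "L v a - \<sigma> * bc V 0 v \<le> L v (q v)" if v: "v \<in> V" for v
  proof -
    have "q v \<in> unit_cube" by (simp add: q_def unit_cube_def)
    then obtain y where y: "y \<in> convex hull V" "q v = a + \<sigma> *\<^sub>R y" using cont by auto
    have "0 \<le> bc V y v" using y(1) conv_bc v by auto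
    moreover have "L v (q v) = L v a + \<sigma> * L v y"
      using L_add_scale[OF v, of a \<sigma> y] y(2) by (simp add: L_def)
    ultimately show ?thesis using sig by (simp add: L_def algebra_simps)
  qed
  have "(\<Sum>v\<in>V. L v a - \<sigma> * bc V 0 v) \<le> (\<Sum>v\<in>V. L v (q v))"
    by (rule sum_mono) (rule ineq)
  moreover have "(\<Sum>v\<in>V. L v a - \<sigma> * bc V 0 v) = - \<sigma>"
    by (simp add: sum_subtractf Lsum sum_distrib_left[symmetric] bc_sum)
  moreover have "(\<Sum>v\<in>V. L v (q v)) = (\<Sum>i\<in>UNIV. \<Sum>v\<in>V. min (d v i) 0)"
    using Lq by (simp add: sum.swap[of _ UNIV V])
  moreover have "(\<Sum>i\<in>UNIV. \<Sum>v\<in>V. min (d v i) 0) \<le> (\<Sum>i\<in>(UNIV::'n set). -1)"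
    by (rule sum_mono) (rule key)
  ultimately show ?thesis by simp
qed


lemma compact_S: "compact (convex hull V)"
  using fin by (simp add: compact_convex_hull finite_imp_compact)

lemma lmeas_S: "convex hull V \<in> lmeasurable"
  using compact_S lmeasurable_compact by blast

lemma bc_bary:
  assumes v: "v \<in> V"
  shows "bc V ((1 / real (card V)) *\<^sub>R \<Sum>V) v = 1 / real (card V)"
proof -
  have "(\<lambda>w. 1 / real (card V)) v = bc V ((1 / real (card V)) *\<^sub>R \<Sum>V) v"
  proof (rule bc_unique[OF _ _ v])
    show "(\<Sum>w\<in>V. 1 / real (card V)) = 1" using cardV by simp
    show "(\<Sum>w\<in>V. (1 / real (card V)) *\<^sub>R w) = (1 / real (card V)) *\<^sub>R \<Sum> V"
      by (simp add: scaleR_sum_right)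
  qed
  then show ?thesis by simp
qed

lemma bc_le1: "x \<in> convex hull V \<Longrightarrow> v \<in> V \<Longrightarrow> bc V x v \<le> 1"
proof -
  assume x: "x \<in> convex hull V" and v: "v \<in> V"
  have nn: "\<forall>w\<in>V. 0 \<le> bc V x w" using x conv_bc by auto
  have "bc V x v \<le> sum (bc V x) V"
    using member_le_sum[of v V "bc V x"] nn v fin by auto
  then show ?thesis using bc_sum by simp
qed

lemma measure_pos: "0 < measure lebesgue (convex hull V)"
proof -
  define b where "b = (1 / real (card V)) *\<^sub>R \<Sum>V"
  define U where "U = (\<Inter>v\<in>V. {x. 0 < bc V x v})"
  have "open U" unfolding U_def
    using fin by (intro open_INT ballI open_Collect_less continuous_on_const bc_cont) auto
  moreover have "b \<in> U" unfolding U_def b_def using bc_bary cardV by auto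
  ultimately obtain r where r: "r > 0" "ball b r \<subseteq> U" by (meson open_contains_ball)
  have "ball b r \<subseteq> convex hull V"
  proof
    fix x assume "x \<in> ball b r"
    then have "x \<in> U" using r(2) by blast
    then have "\<forall>v\<in>V. 0 \<le> bc V x v" unfolding U_def by (simp add: less_imp_le)
    then show "x \<in> convex hull V" using conv_bc by blast
  qed
  then have "measure lebesgue (ball b r) \<le> measure lebesgue (convex hull V)"
    by (intro measure_mono_fmeasurable lmeas_S) auto
  moreover have "0 < measure lebesgue (ball b r)"
    using content_ball_pos[OF r(1)] by (simp add: measure_completion)
  ultimately show ?thesis by linarith
qed

lemma level_set:
  assumes v: "v \<in> V" and s: "0 \<le> s" "s < 1"
  shows "{x \<in> convex hull V. s \<le> bc V x v} = (\<lambda>x. (1-s) *\<^sub>R x + s *\<^sub>R v) ` (convex hull V)"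
proof (intro set_eqI iffI)
  fix y assume y: "y \<in> {x \<in> convex hull V. s \<le> bc V x v}"
  define x where "x = (1 - 1/(1-s)) *\<^sub>R v + (1/(1-s)) *\<^sub>R y"
  have c1: "(1-s)*(1 - 1/(1-s)) = -s" using s by (simp add: field_simps)
  have c2: "(1-s)*(1/(1-s)) = 1" using s by simp
  have "(1-s) *\<^sub>R x = ((1-s)*(1 - 1/(1-s))) *\<^sub>R v + ((1-s)*(1/(1-s))) *\<^sub>R y"
    unfolding x_def scaleR_add_right scaleR_scaleR ..
  also have "\<dots> = (-s) *\<^sub>R v + y" unfolding c1 c2 by simp
  finally have yx: "y = (1-s) *\<^sub>R x + s *\<^sub>R v" by simp
  have "0 \<le> bc V x w" if w: "w \<in> V" for w
  proof -
    have e: "bc V x w = (1 - 1/(1-s)) * bc V v w + (1/(1-s)) * bc V y w"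
      unfolding x_def by (rule bc_affine[OF w])
    show ?thesis
    proof (cases "w = v")
      case True
      have "bc V x w = (1 - 1/(1-s)) + (1/(1-s)) * bc V y v"
        using e True bc_vertex[OF v v] by simp
      also have "\<dots> = (bc V y v - s) / (1 - s)"
      proof -
        define d where "d = 1 - s"
        have d: "d \<noteq> 0" using s by (simp add: d_def)
        have "(1 - 1/d) + (1/d) * bc V y v = (bc V y v - (1 - d)) / d"
          using d by (simp add: field_simps)
        then show ?thesis by (simp add: d_def)
      qed
      finally have "bc V x w = (bc V y v - s) / (1 - s)" .
      then show ?thesis using y s True by simp
    next
      case False
      then have "bc V x w = bc V y w / (1-s)" using e bc_vertex[OF v w] by simp
      then show ?thesis using y s w conv_bc by auto
    qed
  qed
  then have "x \<in> convex hull V" using conv_bc by auto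
  then show "y \<in> (\<lambda>x. (1-s) *\<^sub>R x + s *\<^sub>R v) ` (convex hull V)" using yx by blast
next
  fix y assume "y \<in> (\<lambda>x. (1-s) *\<^sub>R x + s *\<^sub>R v) ` (convex hull V)"
  then obtain x where x: "x \<in> convex hull V" and yx: "y = (1-s) *\<^sub>R x + s *\<^sub>R v" by auto
  have e: "bc V y w = (1 - s) * bc V x w + s * bc V v w" if "w \<in> V" for w
    unfolding yx by (rule bc_affine[OF that])
  have xn: "\<forall>w\<in>V. 0 \<le> bc V x w" using x conv_bc by auto
  have "0 \<le> bc V y w" if w: "w \<in> V" for w
  proof -
    have "0 \<le> (1 - s) * bc V x w" using xn w s by simp
    moreover have "0 \<le> s * bc V v w" using bc_vertex[OF v w] s by simp
    ultimately show ?thesis using e[OF w] by linarith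
  qed
  moreover have "s \<le> bc V y v"
  proof -
    have "0 \<le> (1 - s) * bc V x v" using xn v s by simp
    then show ?thesis using e[OF v] bc_vertex[OF v v] by simp
  qed
  ultimately show "y \<in> {x \<in> convex hull V. s \<le> bc V x v}" using conv_bc by auto
qed

lemma level_meas:
  assumes v: "v \<in> V" and s: "0 \<le> s" "s < 1"
  shows "{x \<in> convex hull V. s \<le> bc V x v} \<in> lmeasurable"
    and "measure lebesgue {x \<in> convex hull V. s \<le> bc V x v} = (1-s)^CARD('n) * measure lebesgue (convex hull V)"
proof -
  have "compact ((\<lambda>x. (1-s) *\<^sub>R x + s *\<^sub>R v) ` (convex hull V))"
    by (intro compact_continuous_image compact_S continuous_intros)
  then show "{x \<in> convex hull V. s \<le> bc V x v} \<in> lmeasurable"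
    using level_set[OF assms] lmeasurable_compact by simp
  show "measure lebesgue {x \<in> convex hull V. s \<le> bc V x v} = (1-s)^CARD('n) * measure lebesgue (convex hull V)"
  proof -
    have "measure lebesgue ((\<lambda>x. (1-s) *\<^sub>R x + s *\<^sub>R v) ` (convex hull V))
        = \<bar>1-s\<bar> ^ DIM(real^'n) * measure lebesgue (convex hull V)"
      by (rule measure_lebesgue_affine)
    moreover have "\<bar>1-s\<bar> = 1 - s" using s by simp
    moreover have "DIM(real^'n) = CARD('n)" by simp
    ultimately show ?thesis unfolding level_set[OF assms] by metis
  qed
qed


lemma bc_int: "v \<in> V \<Longrightarrow> (\<lambda>x. bc V x v) integrable_on convex hull V"
  by (rule cont_integrable_compact[OF bc_cont compact_S])

lemma ind_int:
  assumes v: "v \<in> V" and s: "0 \<le> s" "s < 1"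
  shows "(indicator {x \<in> convex hull V. s \<le> bc V x v} has_integral
           ((1-s)^CARD('n) * measure lebesgue (convex hull V))) (convex hull V)"
proof -
  let ?E = "{x \<in> convex hull V. s \<le> bc V x v}"
  have Eint: "?E \<inter> convex hull V = ?E" by auto
  have "indicat_real ?E integrable_on convex hull V"
    unfolding integrable_on_indicator Eint by (rule level_meas(1)[OF assms])
  moreover have "integral (convex hull V) (indicat_real ?E) = measure lebesgue ?E"
    using integral_indicator[of ?E "convex hull V"] level_meas(1)[OF assms] Eint by simp
  ultimately show ?thesis using level_meas(2)[OF assms]
    by (simp add: has_integral_iff)
qed

lemma int_upper:
  assumes v: "v \<in> V" and N: "N > 0"
  shows "real N * integral (convex hull V) (\<lambda>x. bc V x v)
     \<le> (\<Sum>i<N. (1 - real i / real N)^CARD('n) * measure lebesgue (convex hull V))"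
proof (rule has_integral_le)
  show "((\<lambda>x. real N * bc V x v) has_integral real N * integral (convex hull V) (\<lambda>x. bc V x v)) (convex hull V)"
    by (intro has_integral_mult_right integrable_integral bc_int v)
  show "((\<lambda>x. \<Sum>i<N. indicator {x \<in> convex hull V. real i / real N \<le> bc V x v} x) has_integral
     (\<Sum>i<N. (1 - real i / real N)^CARD('n) * measure lebesgue (convex hull V))) (convex hull V)"
    using N by (intro has_integral_sum ind_int v) auto
  fix x assume x: "x \<in> convex hull V"
  have "0 \<le> bc V x v" using x v conv_bc by auto
  moreover have "bc V x v \<le> 1" using bc_le1 x v by auto
  ultimately have "real N * bc V x v \<le> (\<Sum>i<N. if real i / real N \<le> bc V x v then 1 else 0)"
    using count_upper N by blast
  also have "\<dots> = (\<Sum>i<N. indicator {x \<in> convex hull V. real i / real N \<le> bc V x v} x)"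
    using x by (intro sum.cong) (auto simp: indicator_def)
  finally show "real N * bc V x v \<le> (\<Sum>i<N. indicator {x \<in> convex hull V. real i / real N \<le> bc V x v} x)" .
qed

lemma int_lower:
  assumes v: "v \<in> V" and N: "N > 0"
  shows "(\<Sum>i\<in>{1..<N}. (1 - real i / real N)^CARD('n) * measure lebesgue (convex hull V))
     \<le> real N * integral (convex hull V) (\<lambda>x. bc V x v)"
proof (rule has_integral_le)
  show "((\<lambda>x. real N * bc V x v) has_integral real N * integral (convex hull V) (\<lambda>x. bc V x v)) (convex hull V)"
    by (intro has_integral_mult_right integrable_integral bc_int v)
  show "((\<lambda>x. \<Sum>i\<in>{1..<N}. indicator {x \<in> convex hull V. real i / real N \<le> bc V x v} x) has_integral
     (\<Sum>i\<in>{1..<N}. (1 - real i / real N)^CARD('n) * measure lebesgue (convex hull V))) (convex hull V)"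
    using N by (intro has_integral_sum ind_int v) auto
  fix x assume x: "x \<in> convex hull V"
  have "0 \<le> bc V x v" using x v conv_bc by auto
  moreover have "bc V x v \<le> 1" using bc_le1 x v by auto
  ultimately have "(\<Sum>i\<in>{1..<N}. if real i / real N \<le> bc V x v then 1 else (0::real)) \<le> real N * bc V x v"
    using count_lower N by blast
  moreover have "(\<Sum>i\<in>{1..<N}. if real i / real N \<le> bc V x v then 1 else (0::real)) =
      (\<Sum>i\<in>{1..<N}. indicator {x \<in> convex hull V. real i / real N \<le> bc V x v} x)"
    using x by (intro sum.cong) (auto simp: indicator_def)
  ultimately show "(\<Sum>i\<in>{1..<N}. indicator {x \<in> convex hull V. real i / real N \<le> bc V x v} x) \<le> real N * bc V x v"
    by simp
qed

lemma int_eq: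
  assumes v: "v \<in> V" and w: "w \<in> V"
  shows "integral (convex hull V) (\<lambda>x. bc V x v) = integral (convex hull V) (\<lambda>x. bc V x w)"
proof (rule ccontr)
  let ?M = "measure lebesgue (convex hull V)"
  let ?Iv = "integral (convex hull V) (\<lambda>x. bc V x v)"
  let ?Iw = "integral (convex hull V) (\<lambda>x. bc V x w)"
  assume ne: "?Iv \<noteq> ?Iw"
  define d where "d = \<bar>?Iv - ?Iw\<bar>"
  have d: "d > 0" using ne by (simp add: d_def)
  obtain N :: nat where N: "?M / d < real N" using reals_Archimedean2 by blast
  have "0 < ?M / d" using measure_pos d by simp
  then have Npos: "N > 0" using N by (cases "N = 0") auto
  define lo where "lo = (\<Sum>i\<in>{1..<N}. (1 - real i / real N)^CARD('n) * ?M)"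
  have hi: "(\<Sum>i<N. (1 - real i / real N)^CARD('n) * ?M) = ?M + lo"
  proof -
    have "{..<N} = insert 0 {1..<N}" using Npos by auto
    then show ?thesis unfolding lo_def by simp
  qed
  have "real N * ?Iv \<le> ?M + lo" "lo \<le> real N * ?Iv"
    using int_upper[OF v Npos] int_lower[OF v Npos] hi unfolding lo_def by auto
  moreover have "real N * ?Iw \<le> ?M + lo" "lo \<le> real N * ?Iw"
    using int_upper[OF w Npos] int_lower[OF w Npos] hi unfolding lo_def by auto
  moreover have "real N * d = \<bar>real N * ?Iv - real N * ?Iw\<bar>"
    by (simp add: d_def abs_mult right_diff_distrib[symmetric])
  ultimately have "real N * d \<le> ?M" by (simp only: abs_le_iff) linarith
  moreover have "?M < real N * d" using N d by (simp add: divide_less_eq mult.commute)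
  ultimately show False by simp
qed

lemma cog_formula:
  "center_of_gravity (convex hull V) = (1 / real (card V)) *\<^sub>R \<Sum>V"
proof -
  let ?M = "measure lebesgue (convex hull V)"
  have Vne: "V \<noteq> {}" using cardV by auto
  then obtain v0 where v0: "v0 \<in> V" by auto
  let ?I = "integral (convex hull V) (\<lambda>x. bc V x v0)"
  have Iall: "integral (convex hull V) (\<lambda>x. bc V x v) = ?I" if "v \<in> V" for v
    using int_eq[OF that v0] .
  have "?M = integral (convex hull V) (\<lambda>x. 1::real)"
    using lmeasure_integral[OF lmeas_S] .
  also have "\<dots> = integral (convex hull V) (\<lambda>x. \<Sum>v\<in>V. bc V x v)"
    by (simp add: bc_sum)
  also have "\<dots> = (\<Sum>v\<in>V. integral (convex hull V) (\<lambda>x. bc V x v))"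
    by (rule integral_sum[OF fin bc_int])
  also have "\<dots> = real (card V) * ?I" using Iall by simp
  finally have MI: "?M = real (card V) * ?I" .
  have "((\<lambda>x. \<Sum>v\<in>V. bc V x v *\<^sub>R v) has_integral (\<Sum>v\<in>V. ?I *\<^sub>R v)) (convex hull V)"
  proof (rule has_integral_sum[OF fin])
    fix v assume v: "v \<in> V"
    show "((\<lambda>x. bc V x v *\<^sub>R v) has_integral ?I *\<^sub>R v) (convex hull V)"
      using has_integral_scaleR_left[OF integrable_integral[OF bc_int[OF v]], of v] Iall[OF v] by simp
  qed
  then have "((\<lambda>x. x) has_integral (\<Sum>v\<in>V. ?I *\<^sub>R v)) (convex hull V)"
    by (simp add: bc_rep)
  then have intx: "integral (convex hull V) (\<lambda>x. x) = ?I *\<^sub>R \<Sum>V"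
    by (simp add: integral_unique scaleR_sum_right)
  have Mpos: "?M > 0" by (rule measure_pos)
  have cpos: "real (card V) > 0" using cardV by simp
  have Ipos: "?I > 0" using MI Mpos cpos by (simp add: zero_less_mult_iff)
  show ?thesis unfolding center_of_gravity_def intx using MI Ipos cpos
    by (simp add: field_simps)
qed


lemma homot_affine: "homot \<sigma> S = (\<lambda>x. (center_of_gravity S - \<sigma> *\<^sub>R center_of_gravity S) + \<sigma> *\<^sub>R x) ` S"
  unfolding homot_def by (intro image_cong refl) (simp add: algebra_simps)

lemma xi_ge:
  assumes sub: "convex hull V \<subseteq> unit_cube"
  shows "real CARD('n) \<le> xi_simplex (convex hull V)"
proof -
  define c where "c = (1 / real (card V)) *\<^sub>R \<Sum>V"
  have cog: "center_of_gravity (convex hull V) = c" unfolding c_def by (rule cog_formula)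
  have bcc: "bc V c v = 1 / real (card V)" if "v \<in> V" for v
    unfolding c_def using bc_bary[OF that] .
  have Qc: "unit_cube = cbox (0::real^'n) 1" by (auto simp: unit_cube_def mem_box_cart)
  have cQ: "compact (unit_cube :: (real^'n) set)" unfolding Qc by simp
  have contg: "continuous_on unit_cube (\<lambda>q. \<Sum>v\<in>V. \<bar>bc V q v\<bar>)"
    by (intro continuous_intros continuous_on_subset[OF bc_cont]) auto
  have "(0::real^'n) \<in> unit_cube" by (simp add: unit_cube_def)
  then obtain q0 where q0: "\<forall>q\<in>unit_cube. (\<Sum>v\<in>V. \<bar>bc V q v\<bar>) \<le> (\<Sum>v\<in>V. \<bar>bc V q0 v\<bar>)"
    using continuous_attains_sup[OF cQ _ contg] by blast
  define B where "B = (\<Sum>v\<in>V. \<bar>bc V q0 v\<bar>)"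
  have B0: "0 \<le> B" unfolding B_def by (simp add: sum_nonneg)
  define \<sigma> where "\<sigma> = 1 + real (card V) * B"
  have sig1: "1 \<le> \<sigma>" using B0 by (simp add: \<sigma>_def)
  have "unit_cube \<subseteq> homot \<sigma> (convex hull V)"
  proof
    fix q :: "real^'n" assume q: "q \<in> unit_cube"
    define y where "y = (1 - 1/\<sigma>) *\<^sub>R c + (1/\<sigma>) *\<^sub>R q"
    have "0 \<le> bc V y v" if v: "v \<in> V" for v
    proof -
      have e: "bc V y v = (1 - 1/\<sigma>) * (1 / real (card V)) + (1/\<sigma>) * bc V q v"
        unfolding y_def bc_affine[OF v] bcc[OF v] ..
      have "\<bar>bc V q v\<bar> \<le> (\<Sum>v\<in>V. \<bar>bc V q v\<bar>)"
        using member_le_sum[of v V "\<lambda>v. \<bar>bc V q v\<bar>"] v fin by simp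
      also have "\<dots> \<le> B" using q0 q unfolding B_def by blast
      finally have bq: "- B \<le> bc V q v" by simp
      have cpos: "real (card V) > 0" using cardV by simp
      have "(1 - 1/\<sigma>) * (1 / real (card V)) = B / \<sigma>"
        using sig1 cpos by (simp add: \<sigma>_def field_simps)
      then have "bc V y v = (B + bc V q v) / \<sigma>" using e by (simp add: add_divide_distrib)
      then show ?thesis using bq sig1 by simp
    qed
    then have yS: "y \<in> convex hull V" using conv_bc by auto
    have "q = c + \<sigma> *\<^sub>R (y - c)"
      using sig1 by (simp add: y_def algebra_simps scaleR_diff_right)
    then show "q \<in> homot \<sigma> (convex hull V)" unfolding homot_def cog using yS by blast
  qed
  then have ne: "\<sigma> \<in> {\<sigma>. \<sigma> \<ge> 1 \<and> unit_cube \<subseteq> homot \<sigma> (convex hull V)}" using sig1 by simp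
  show ?thesis unfolding xi_simplex_def xi_rel_def
  proof (rule cInf_greatest)
    show "{\<sigma>. \<sigma> \<ge> 1 \<and> unit_cube \<subseteq> homot \<sigma> (convex hull V)} \<noteq> {}" using ne by blast
    fix s assume s: "s \<in> {\<sigma>. \<sigma> \<ge> 1 \<and> unit_cube \<subseteq> homot \<sigma> (convex hull V)}"
    then have "unit_cube \<subseteq> (\<lambda>x. (center_of_gravity (convex hull V) - s *\<^sub>R center_of_gravity (convex hull V)) + s *\<^sub>R x) ` (convex hull V)"
      using homot_affine[of s "convex hull V"] by simp
    then show "real CARD('n) \<le> s" using lower_bound[OF sub] s by auto
  qed
qed

end


declare sum.lessThan_Suc[simp del]

definition hh :: "(nat \<Rightarrow> nat \<Rightarrow> real) \<Rightarrow> nat \<Rightarrow> nat \<Rightarrow> real" where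
  "hh H k j = H k j * H k 0"

definition hv :: "(nat \<Rightarrow> nat \<Rightarrow> real) \<Rightarrow> ('n \<Rightarrow> nat) \<Rightarrow> nat \<Rightarrow> 'n \<Rightarrow> real" where
  "hv H e k i = hh H k (e i + 1)"

definition vert :: "(nat \<Rightarrow> nat \<Rightarrow> real) \<Rightarrow> ('n \<Rightarrow> nat) \<Rightarrow> nat \<Rightarrow> real^'n" where
  "vert H e k = (\<chi> i. (1 - hv H e k i) / 2)"

definition lam :: "(nat \<Rightarrow> nat \<Rightarrow> real) \<Rightarrow> ('n::finite \<Rightarrow> nat) \<Rightarrow> nat \<Rightarrow> real^'n \<Rightarrow> real" where
  "lam H e k x = (1 + (\<Sum>i\<in>UNIV. hv H e k i * (1 - 2 * x$i))) / real (CARD('n) + 1)"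

lemma unit_cube_cbox: "(unit_cube :: (real^'n::finite) set) = cbox 0 1"
  by (auto simp: unit_cube_def mem_box_cart)

lemma convex_unit_cube: "convex (unit_cube :: (real^'n::finite) set)"
  unfolding unit_cube_cbox by (rule convex_box)

lemma ver_cube: "x \<in> ver (unit_cube :: (real^'n::finite) set) \<longleftrightarrow> (\<forall>i. x$i = 0 \<or> x$i = 1)"
proof
  assume x: "x \<in> ver unit_cube"
  then have xQ: "x \<in> unit_cube" and ext: "\<forall>a\<in>unit_cube. \<forall>b\<in>unit_cube. x \<notin> open_segment a b"
    by (auto simp: ver_def extreme_point_of_def)
  show "\<forall>i. x$i = 0 \<or> x$i = 1"
  proof (rule ccontr)
    assume "\<not> (\<forall>i. x$i = 0 \<or> x$i = 1)"
    then obtain i where i: "x$i \<noteq> 0" "x$i \<noteq> 1" by blast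
    have xi: "0 < x$i" "x$i < 1" using xQ i unfolding unit_cube_def by (auto simp: less_le)
    define t where "t = min (x$i) (1 - x$i)"
    have t: "0 < t" "t \<le> x$i" "t \<le> 1 - x$i" using xi by (auto simp: t_def)
    define a where "a = x - t *\<^sub>R axis i 1"
    define b where "b = x + t *\<^sub>R axis i 1"
    have aQ: "a \<in> unit_cube" using xQ t unfolding unit_cube_def a_def by (auto simp: axis_def)
    have bQ: "b \<in> unit_cube" using xQ t unfolding unit_cube_def b_def by (auto simp: axis_def)
    have "a \<noteq> b"
    proof
      assume "a = b"
      then have "a $ i = b $ i" by simp
      then show False using t by (simp add: a_def b_def axis_def)
    qed
    moreover have "x = (1 - 1/2) *\<^sub>R a + (1/2) *\<^sub>R b"
      by (simp add: a_def b_def vec_eq_iff algebra_simps)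
    ultimately have "x \<in> open_segment a b" unfolding in_segment(2)
      by (intro conjI exI[of _ "1/2"]) auto
    then show False using ext aQ bQ by blast
  qed
next
  assume x01: "\<forall>i. x$i = 0 \<or> x$i = 1"
  have "0 \<le> x$i \<and> x$i \<le> 1" for i using x01[rule_format, of i] by auto
  then have xQ: "x \<in> unit_cube" unfolding unit_cube_def by simp
  have "x \<notin> open_segment a b" if a: "a \<in> unit_cube" and b: "b \<in> unit_cube" for a b
  proof
    assume "x \<in> open_segment a b"
    then obtain u where ab: "a \<noteq> b" and u: "0 < u" "u < 1" and xu: "x = (1 - u) *\<^sub>R a + u *\<^sub>R b"
      unfolding in_segment(2) by blast
    have "a $ i = b $ i" for i
    proof -
      have ai: "0 \<le> a$i" "a$i \<le> 1" and bi: "0 \<le> b$i" "b$i \<le> 1" using a b unfolding unit_cube_def by auto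
      have xi: "x$i = (1 - u) * a$i + u * b$i" using xu by simp
      have p1: "0 \<le> (1 - u) * a$i" "0 \<le> u * b$i" using ai bi u by auto
      have p2: "(1 - u) * a$i \<le> 1 - u" "u * b$i \<le> u" using ai bi u by (auto simp: mult_left_le)
      show ?thesis
      proof (cases "x$i = 0")
        case True
        then have "(1 - u) * a$i = 0" "u * b$i = 0" using xi p1 by linarith+
        then show ?thesis using u by simp
      next
        case False
        then have "x$i = 1" using x01 by blast
        then have "(1 - u) * a$i = 1 - u" "u * b$i = u" using xi p2 by linarith+
        then show ?thesis using u by simp
      qed
    qed
    then have "a = b" by (simp add: vec_eq_iff)
    then show False using ab by simp
  qed
  then show "x \<in> ver unit_cube" using xQ by (auto simp: ver_def extreme_point_of_def)
qed

definition cc :: "real^'n::finite" where "cc = (\<chi> i. 1/2)"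

definition gg :: "real \<Rightarrow> real^'n::finite \<Rightarrow> real^'n" where
  "gg t x = (cc - t *\<^sub>R cc) + t *\<^sub>R x"

lemma gg_inj: "t \<noteq> 0 \<Longrightarrow> inj (gg t)"
  by (rule injI) (simp add: gg_def)

lemma aff_hull_gg:
  fixes V :: "(real^'n::finite) set"
  assumes "affine hull V = UNIV" "t \<noteq> 0"
  shows "affine hull (gg t ` V) = UNIV"
proof -
  have "gg t ` V = (\<lambda>x. (cc - t *\<^sub>R cc) + x) ` ((\<lambda>x. t *\<^sub>R x) ` V)"
    by (auto simp: gg_def image_image)
  then have "affine hull (gg t ` V) = (\<lambda>x. (cc - t *\<^sub>R cc) + x) ` ((\<lambda>x. t *\<^sub>R x) ` (affine hull V))"
    using affine_hull_translation affine_hull_linear_image[OF bounded_linear_scaleR_right, of t V] by metis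
  also have "\<dots> = UNIV"
  proof -
    have "z = (cc - t *\<^sub>R cc) + t *\<^sub>R ((1/t) *\<^sub>R (z - (cc - t *\<^sub>R cc)))" for z :: "real^'n"
      using assms(2) by simp
    then show ?thesis using assms(1) by (metis UNIV_I image_eqI subsetI subset_antisym)
  qed
  finally show ?thesis .
qed

lemma aux_zero: "(N::real) > 0 \<Longrightarrow> 1/(N+1) + (1/N) * ((1 - N)/(N+1) - 1/(N+1)) = 0"
proof -
  assume N: "N > 0"
  have "(1 - N)/(N+1) - 1/(N+1) = -N/(N+1)" by (simp add: diff_divide_distrib[symmetric])
  moreover have "(1/N) * (-N/(N+1)) = -1/(N+1)" using N by simp
  ultimately show ?thesis by simp
qed

lemma aux_pos: "(N::real) > 0 \<Longrightarrow> 0 \<le> 1/(N+1) + (1/N) * (2/(N+1) - 1/(N+1))"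
proof -
  assume N: "N > 0"
  have "2/(N+1) - 1/(N+1) = 1/(N+1)" by (simp add: diff_divide_distrib[symmetric])
  then show ?thesis using N by simp
qed

definition verts :: "(nat \<Rightarrow> nat \<Rightarrow> real) \<Rightarrow> ('n::finite \<Rightarrow> nat) \<Rightarrow> (real^'n) set" where
  "verts H e = vert H e ` {..<CARD('n)+1}"

context
  fixes H :: "nat \<Rightarrow> nat \<Rightarrow> real" and e :: "'n::finite \<Rightarrow> nat"
  assumes Hpm: "\<forall>i<CARD('n)+1. \<forall>j<CARD('n)+1. H i j = 1 \<or> H i j = -1"
    and Hrow: "\<forall>i<CARD('n)+1. \<forall>k<CARD('n)+1. (\<Sum>j<CARD('n)+1. H i j * H k j) = (if i = k then real (CARD('n)+1) else 0)"
    and Hcol: "\<forall>i<CARD('n)+1. \<forall>k<CARD('n)+1. (\<Sum>j<CARD('n)+1. H j i * H j k) = (if i = k then real (CARD('n)+1) else 0)"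
    and ebij: "bij_betw e UNIV {0..<CARD('n)}"
begin

lemma e_lt: "e i < CARD('n)" using ebij by (auto simp: bij_betw_def)

lemma H_sq: "k < CARD('n)+1 \<Longrightarrow> j < CARD('n)+1 \<Longrightarrow> H k j * H k j = 1"
proof -
  assume k: "k < CARD('n)+1" and j: "j < CARD('n)+1"
  have a: "H k j = 1 \<or> H k j = -1" using Hpm k j by auto
  then show ?thesis by auto
qed

lemma hh_pm: "k < CARD('n)+1 \<Longrightarrow> j < CARD('n)+1 \<Longrightarrow> hh H k j = 1 \<or> hh H k j = -1"
proof -
  assume k: "k < CARD('n)+1" and j: "j < CARD('n)+1"
  have a: "H k j = 1 \<or> H k j = -1" using Hpm k j by auto
  have b: "H k 0 = 1 \<or> H k 0 = -1" using Hpm k by auto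
  from a b show ?thesis unfolding hh_def by auto
qed

lemma hh_0: "k < CARD('n)+1 \<Longrightarrow> hh H k 0 = 1"
  unfolding hh_def using H_sq by simp

lemma hh_row: "k < CARD('n)+1 \<Longrightarrow> l < CARD('n)+1 \<Longrightarrow>
   (\<Sum>j<CARD('n)+1. hh H k j * hh H l j) = (if k = l then real (CARD('n)+1) else 0)"
proof -
  assume k: "k < CARD('n)+1" and l: "l < CARD('n)+1"
  have "(\<Sum>j<CARD('n)+1. hh H k j * hh H l j) = (H k 0 * H l 0) * (\<Sum>j<CARD('n)+1. H k j * H l j)"
  proof -
    have "(\<Sum>j<CARD('n)+1. hh H k j * hh H l j) = (\<Sum>j<CARD('n)+1. (H k 0 * H l 0) * (H k j * H l j))"
      unfolding hh_def by (intro sum.cong) (simp_all add: mult_ac)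
    then show ?thesis by (simp only: sum_distrib_left)
  qed
  also have "\<dots> = (if k = l then real (CARD('n)+1) else 0)"
    using Hrow k l H_sq[OF k, of 0] by auto
  finally show ?thesis .
qed

lemma hh_col: "i < CARD('n)+1 \<Longrightarrow> j < CARD('n)+1 \<Longrightarrow>
   (\<Sum>k<CARD('n)+1. hh H k i * hh H k j) = (if i = j then real (CARD('n)+1) else 0)"
proof -
  assume i: "i < CARD('n)+1" and j: "j < CARD('n)+1"
  have "(\<Sum>k<CARD('n)+1. hh H k i * hh H k j) = (\<Sum>k<CARD('n)+1. H k i * H k j)"
  proof (rule sum.cong[OF refl])
    fix k assume "k \<in> {..<CARD('n)+1}"
    then have "H k 0 * H k 0 = 1" using H_sq by simp
    then show "hh H k i * hh H k j = H k i * H k j" unfolding hh_def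
      by (metis mult.commute mult.left_commute mult.right_neutral)
  qed
  then show ?thesis using Hcol i j by simp
qed

lemma sum_reindex_e: "(\<Sum>j<CARD('n)+1. f j) = f 0 + (\<Sum>i\<in>UNIV. f (e i + 1))"
proof -
  have "(\<Sum>j<CARD('n)+1. f j) = f 0 + (\<Sum>j<CARD('n). f (Suc j))"
    using sum.lessThan_Suc_shift[of f "CARD('n)"] by simp
  also have "(\<Sum>j<CARD('n). f (Suc j)) = (\<Sum>i\<in>UNIV. f (e i + 1))"
    using sum.reindex_bij_betw[OF ebij, of "\<lambda>j. f (Suc j)"] by (simp add: atLeast0LessThan)
  finally show ?thesis .
qed

lemma hv_pm: "k < CARD('n)+1 \<Longrightarrow> hv H e k i = 1 \<or> hv H e k i = -1"
  unfolding hv_def using hh_pm e_lt by simp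

lemma hv_sq: "k < CARD('n)+1 \<Longrightarrow> hv H e k i * hv H e k i = 1"
proof -
  assume k: "k < CARD('n)+1"
  then have "hv H e k i = 1 \<or> hv H e k i = -1" by (rule hv_pm)
  then show ?thesis by auto
qed

lemma hv_row: "k < CARD('n)+1 \<Longrightarrow> l < CARD('n)+1 \<Longrightarrow>
   (\<Sum>i\<in>UNIV. hv H e k i * hv H e l i) = (if k = l then real (CARD('n)+1) else 0) - 1"
  using hh_row[of k l] sum_reindex_e[of "\<lambda>j. hh H k j * hh H l j"] hh_0
  by (simp add: hv_def)

lemma hv_colsum: "(\<Sum>k<CARD('n)+1. hv H e k i) = 0"
proof -
  have "(\<Sum>k<CARD('n)+1. hv H e k i) = (\<Sum>k<CARD('n)+1. hh H k (e i + 1) * hh H k 0)"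
    by (intro sum.cong) (auto simp: hv_def hh_0)
  also have "\<dots> = 0" using hh_col[of "e i + 1" 0] e_lt[of i] by simp
  finally show ?thesis .
qed

lemma hv_col: "(\<Sum>k<CARD('n)+1. hv H e k i * hv H e k i') = (if i = i' then real (CARD('n)+1) else 0)"
proof -
  have "(\<Sum>k<CARD('n)+1. hv H e k i * hv H e k i') = (\<Sum>k<CARD('n)+1. hh H k (e i + 1) * hh H k (e i' + 1))"
    by (simp add: hv_def)
  also have "\<dots> = (if e i + 1 = e i' + 1 then real (CARD('n)+1) else 0)"
    using hh_col[of "e i + 1" "e i' + 1"] e_lt[of i] e_lt[of i'] by simp
  also have "(e i + 1 = e i' + 1) = (i = i')"
    using ebij by (auto simp: bij_betw_def inj_on_def)
  finally show ?thesis by simp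
qed


lemma s_sum: "(\<Sum>k<CARD('n)+1. \<Sum>i\<in>UNIV. hv H e k i * y i) = 0"
proof -
  have "(\<Sum>k<CARD('n)+1. \<Sum>i\<in>UNIV. hv H e k i * y i) = (\<Sum>i\<in>UNIV. \<Sum>k<CARD('n)+1. hv H e k i * y i)"
    by (rule sum.swap)
  also have "\<dots> = (\<Sum>i\<in>UNIV. (\<Sum>k<CARD('n)+1. hv H e k i) * y i)"
    by (simp only: sum_distrib_right)
  also have "\<dots> = 0" unfolding hv_colsum by simp
  finally show ?thesis .
qed

lemma s_col: "(\<Sum>k<CARD('n)+1. (\<Sum>i\<in>UNIV. hv H e k i * y i) * hv H e k j) = real (CARD('n)+1) * y j"
proof -
  have "(\<Sum>k<CARD('n)+1. (\<Sum>i\<in>UNIV. hv H e k i * y i) * hv H e k j)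
      = (\<Sum>k<CARD('n)+1. \<Sum>i\<in>UNIV. y i * (hv H e k i * hv H e k j))"
    by (intro sum.cong refl) (simp add: sum_distrib_left sum_distrib_right mult_ac)
  also have "\<dots> = (\<Sum>i\<in>UNIV. \<Sum>k<CARD('n)+1. y i * (hv H e k i * hv H e k j))"
    by (rule sum.swap)
  also have "\<dots> = (\<Sum>i\<in>UNIV. y i * (\<Sum>k<CARD('n)+1. hv H e k i * hv H e k j))"
    by (simp only: sum_distrib_left)
  also have "\<dots> = (\<Sum>i\<in>UNIV. if i = j then y i * real (CARD('n)+1) else 0)"
    by (intro sum.cong refl) (simp only: hv_col, simp)
  also have "\<dots> = real (CARD('n)+1) * y j" by simp
  finally show ?thesis .
qed

lemma lam_sum: "(\<Sum>k<CARD('n)+1. lam H e k x) = 1"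
proof -
  have "(\<Sum>k<CARD('n)+1. lam H e k x) =
     (\<Sum>k<CARD('n)+1. 1 + (\<Sum>i\<in>UNIV. hv H e k i * (1 - 2 * x$i))) / real (CARD('n) + 1)"
    unfolding lam_def by (simp only: sum_divide_distrib)
  also have "(\<Sum>k<CARD('n)+1. 1 + (\<Sum>i\<in>UNIV. hv H e k i * (1 - 2 * x$i))) = real (CARD('n)+1)"
    using s_sum[of "\<lambda>i. 1 - 2 * x$i"] by (simp only: sum.distrib) simp
  finally show ?thesis by simp
qed

lemma lam_rep: "(\<Sum>k<CARD('n)+1. lam H e k x *\<^sub>R vert H e k) = x"
proof (subst vec_eq_iff, rule allI)
  fix j
  define y where "y i = 1 - 2 * x$i" for i
  define m where "m = real (CARD('n)+1)"
  have m: "m > 0" by (simp add: m_def)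
  have "(\<Sum>k<CARD('n)+1. lam H e k x *\<^sub>R vert H e k) $ j
      = (\<Sum>k<CARD('n)+1. (1 + (\<Sum>i\<in>UNIV. hv H e k i * y i)) * (1 - hv H e k j)) / (2 * m)"
    by (simp add: lam_def vert_def y_def m_def sum_divide_distrib mult_ac)
  also have "(\<Sum>k<CARD('n)+1. (1 + (\<Sum>i\<in>UNIV. hv H e k i * y i)) * (1 - hv H e k j))
     = (\<Sum>k<CARD('n)+1. 1 - hv H e k j + (\<Sum>i\<in>UNIV. hv H e k i * y i) - (\<Sum>i\<in>UNIV. hv H e k i * y i) * hv H e k j)"
    by (intro sum.cong refl) (simp add: algebra_simps)
  also have "\<dots> = m - 0 + 0 - m * y j"
    unfolding sum.distrib sum_subtractf s_sum s_col hv_colsum by (simp add: m_def)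
  also have "(m - 0 + 0 - m * y j) / (2 * m) = x $ j"
    using m by (simp add: y_def field_simps)
  finally show "(\<Sum>k<CARD('n)+1. lam H e k x *\<^sub>R vert H e k) $ j = x $ j" .
qed

lemma lam_vert: "k < CARD('n)+1 \<Longrightarrow> l < CARD('n)+1 \<Longrightarrow> lam H e k (vert H e l) = (if k = l then 1 else 0)"
proof -
  assume k: "k < CARD('n)+1" and l: "l < CARD('n)+1"
  have "lam H e k (vert H e l) = (1 + (\<Sum>i\<in>UNIV. hv H e k i * hv H e l i)) / real (CARD('n) + 1)"
    by (simp add: lam_def vert_def diff_divide_distrib)
  then show ?thesis using hv_row[OF k l] by simp
qed

lemma vert_inj: "inj_on (vert H e) {..<CARD('n)+1}"
proof (rule inj_onI)
  fix k l assume k: "k \<in> {..<CARD('n)+1}" and l: "l \<in> {..<CARD('n)+1}" and eq: "vert H e k = vert H e l"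
  have "lam H e k (vert H e k) = lam H e k (vert H e l)" using eq by simp
  then show "k = l" using lam_vert k l by (auto split: if_splits)
qed

lemma verts_fin: "finite (verts H e)" by (simp add: verts_def)

lemma verts_card: "card (verts H e) = CARD('n) + 1"
  unfolding verts_def using card_image[OF vert_inj] by simp

lemma sum_verts: "(\<Sum>w\<in>verts H e. f w) = (\<Sum>k<CARD('n)+1. f (vert H e k))"
  unfolding verts_def using sum.reindex[OF vert_inj, of f] by (simp only: comp_def)

definition uu where "uu x w = lam H e (inv_into {..<CARD('n)+1} (vert H e) w) x"

lemma uu_vert: "k < CARD('n)+1 \<Longrightarrow> uu x (vert H e k) = lam H e k x"
  unfolding uu_def using inv_into_f_f[OF vert_inj] by simp

lemma uu_sum: "sum (uu x) (verts H e) = 1"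
  unfolding sum_verts using lam_sum by (simp add: uu_vert)

lemma uu_rep: "(\<Sum>w\<in>verts H e. uu x w *\<^sub>R w) = x"
  unfolding sum_verts using lam_rep by (simp add: uu_vert)

lemma verts_aff: "affine hull (verts H e) = UNIV"
  using affine_hull_finite[OF verts_fin] uu_sum uu_rep by auto

lemma verts_indep: "\<not> affine_dependent (verts H e)"
proof -
  have "aff_dim (verts H e) = int CARD('n)"
    using aff_dim_affine_hull[of "verts H e"] verts_aff by simp
  then show ?thesis unfolding affine_independent_iff_card using verts_fin verts_card by simp
qed

lemma bc_verts: "k < CARD('n)+1 \<Longrightarrow> bc (verts H e) x (vert H e k) = lam H e k x"
proof -
  assume k: "k < CARD('n)+1"
  have "vert H e k \<in> verts H e" using k by (simp add: verts_def)
  then have "uu x (vert H e k) = bc (verts H e) x (vert H e k)"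
    using bc_unique[OF verts_fin verts_indep verts_card uu_sum uu_rep] by blast
  then show ?thesis using uu_vert[OF k] by simp
qed


lemma vert_01: "k < CARD('n)+1 \<Longrightarrow> vert H e k $ i = 0 \<or> vert H e k $ i = 1"
  using hv_pm[of k i] by (auto simp: vert_def)

lemma verts_cube: "verts H e \<subseteq> unit_cube"
proof
  fix v assume "v \<in> verts H e"
  then obtain k where k: "k < CARD('n)+1" "v = vert H e k" by (auto simp: verts_def)
  show "v \<in> unit_cube" unfolding unit_cube_def
  proof (safe)
    fix i
    show "0 \<le> v$i" using vert_01[OF k(1), of i] k(2) by auto
    show "v$i \<le> 1" using vert_01[OF k(1), of i] k(2) by auto
  qed
qed

lemma S_cube: "convex hull (verts H e) \<subseteq> unit_cube"
  by (rule hull_minimal[of "verts H e" unit_cube convex, OF verts_cube convex_unit_cube])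

lemma S_mem: "y \<in> convex hull (verts H e) \<longleftrightarrow> (\<forall>k<CARD('n)+1. 0 \<le> lam H e k y)"
  using conv_bc[OF verts_fin verts_indep verts_card] bc_verts by (auto simp: verts_def)


lemma cog_S: "center_of_gravity (convex hull (verts H e)) = cc"
proof -
  have "center_of_gravity (convex hull (verts H e)) = (1 / real (card (verts H e))) *\<^sub>R \<Sum>(verts H e)"
    by (rule cog_formula[OF verts_fin verts_indep verts_card])
  also have "\<Sum>(verts H e) = (\<Sum>k<CARD('n)+1. vert H e k)" by (rule sum_verts)
  also have "(1 / real (card (verts H e))) *\<^sub>R (\<Sum>k<CARD('n)+1. vert H e k) = cc"
  proof (subst vec_eq_iff, rule allI)
    fix i
    have "(\<Sum>k<CARD('n)+1. vert H e k) $ i = (\<Sum>k<CARD('n)+1. (1 - hv H e k i) / 2)"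
      by (simp add: vert_def)
    also have "\<dots> = (\<Sum>k<CARD('n)+1. 1 - hv H e k i) / 2" by (simp only: sum_divide_distrib)
    also have "\<dots> = real (CARD('n)+1) / 2" by (simp only: sum_subtractf hv_colsum) simp
    finally show "((1 / real (card (verts H e))) *\<^sub>R (\<Sum>k<CARD('n)+1. vert H e k)) $ i = cc $ i"
      by (simp add: verts_card cc_def)
  qed
  finally show ?thesis .
qed

lemma lam_homot: "lam H e k (cc + t *\<^sub>R (x - cc)) = 1 / real (CARD('n)+1) + t * (lam H e k x - 1 / real (CARD('n)+1))"
proof -
  have A: "(\<Sum>i\<in>UNIV. hv H e k i * (1 - 2 * (cc + t *\<^sub>R (x - cc)) $ i)) = t * (\<Sum>i\<in>UNIV. hv H e k i * (1 - 2 * x $ i))"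
    unfolding sum_distrib_left by (intro sum.cong refl) (simp add: cc_def algebra_simps)
  have B: "(1 + t * S) / m = 1 / m + t * ((1 + S) / m - 1 / m)" if "m > 0" for m S :: real
    using that by (simp add: field_simps)
  show ?thesis unfolding lam_def A by (rule B) simp
qed

lemma homot_mem:
  assumes sig: "\<sigma> > 0"
  shows "x \<in> homot \<sigma> (convex hull (verts H e)) \<longleftrightarrow> (\<forall>k<CARD('n)+1. (1 - \<sigma>) / real (CARD('n)+1) \<le> lam H e k x)"
proof -
  define m where "m = real (CARD('n)+1)"
  have m: "m > 0" by (simp add: m_def)
  have "x \<in> homot \<sigma> (convex hull (verts H e)) \<longleftrightarrow> cc + (1/\<sigma>) *\<^sub>R (x - cc) \<in> convex hull (verts H e)"
  proof
    assume "x \<in> homot \<sigma> (convex hull (verts H e))"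
    then obtain y where y: "y \<in> convex hull (verts H e)" "x = cc + \<sigma> *\<^sub>R (y - cc)"
      unfolding homot_def cog_S by auto
    have "cc + (1/\<sigma>) *\<^sub>R (x - cc) = y" using sig by (simp add: y(2))
    then show "cc + (1/\<sigma>) *\<^sub>R (x - cc) \<in> convex hull (verts H e)" using y(1) by simp
  next
    assume "cc + (1/\<sigma>) *\<^sub>R (x - cc) \<in> convex hull (verts H e)"
    moreover have "x = cc + \<sigma> *\<^sub>R ((cc + (1/\<sigma>) *\<^sub>R (x - cc)) - cc)" using sig by simp
    ultimately show "x \<in> homot \<sigma> (convex hull (verts H e))"
      unfolding homot_def cog_S by blast
  qed
  also have "\<dots> \<longleftrightarrow> (\<forall>k<CARD('n)+1. 0 \<le> 1/m + (1/\<sigma>) * (lam H e k x - 1/m))"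
    unfolding S_mem lam_homot m_def ..
  also have "\<dots> \<longleftrightarrow> (\<forall>k<CARD('n)+1. (1 - \<sigma>) / m \<le> lam H e k x)"
  proof -
    have "0 \<le> 1/m + (1/\<sigma>) * (l - 1/m) \<longleftrightarrow> (1 - \<sigma>) / m \<le> l" for l
    proof -
      have "0 \<le> 1/m + (1/\<sigma>) * (l - 1/m) \<longleftrightarrow> 0 \<le> \<sigma> * (1/m + (1/\<sigma>) * (l - 1/m))"
        using sig by (simp add: zero_le_mult_iff)
      also have "\<sigma> * (1/m + (1/\<sigma>) * (l - 1/m)) = l - (1 - \<sigma>)/m"
        using sig m by (simp add: field_simps)
      finally show ?thesis by simp
    qed
    then show ?thesis by simp
  qed
  finally show ?thesis unfolding m_def .
qed

lemma lam_cube: "x \<in> unit_cube \<Longrightarrow> k < CARD('n)+1 \<Longrightarrow> (1 - real CARD('n)) / real (CARD('n)+1) \<le> lam H e k x"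
proof -
  assume x: "x \<in> unit_cube" and k: "k < CARD('n)+1"
  have "(\<Sum>i\<in>(UNIV::'n set). -1) \<le> (\<Sum>i\<in>UNIV. hv H e k i * (1 - 2 * x$i))"
  proof (rule sum_mono)
    fix i
    have "0 \<le> x$i" "x$i \<le> 1" using x unfolding unit_cube_def by auto
    then show "-1 \<le> hv H e k i * (1 - 2 * x$i)" using hv_pm[OF k, of i] by auto
  qed
  then have "1 - real CARD('n) \<le> 1 + (\<Sum>i\<in>UNIV. hv H e k i * (1 - 2 * x$i))" by simp
  then show ?thesis unfolding lam_def by (simp add: divide_right_mono)
qed

lemma cube_sub_homot: "unit_cube \<subseteq> homot (real CARD('n)) (convex hull (verts H e))"
  using homot_mem[of "real CARD('n)"] lam_cube by auto


lemma dist_vert: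
  assumes k: "k < CARD('n)+1" and l: "l < CARD('n)+1" and kl: "k \<noteq> l"
  shows "dist (vert H e k) (vert H e l) = sqrt (real (CARD('n)+1) / 2)"
proof -
  have "(vert H e k - vert H e l) \<bullet> (vert H e k - vert H e l)
      = (\<Sum>i\<in>UNIV. (hv H e l i * hv H e l i + hv H e k i * hv H e k i - 2 * (hv H e k i * hv H e l i)) / 4)"
    unfolding inner_vec_def by (intro sum.cong refl) (simp add: vert_def field_simps)
  also have "\<dots> = (\<Sum>i\<in>UNIV. (2 - 2 * (hv H e k i * hv H e l i)) / 4)"
    using hv_sq[OF k] hv_sq[OF l] by simp
  also have "\<dots> = (2 * real CARD('n) - 2 * (\<Sum>i\<in>UNIV. hv H e k i * hv H e l i)) / 4"
    by (simp add: sum_divide_distrib[symmetric] sum_subtractf sum_distrib_left[symmetric])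
  also have "\<dots> = real (CARD('n)+1) / 2" using hv_row[OF k l] kl by simp
  finally show ?thesis by (simp add: dist_norm norm_eq_sqrt_inner)
qed

lemma regular_S: "regular_simplex (convex hull (verts H e))"
  unfolding regular_simplex_def nondeg_simplex_def
proof (intro conjI exI)
  show "finite (verts H e)" "card (verts H e) = CARD('n) + 1" "\<not> affine_dependent (verts H e)"
    "convex hull verts H e = convex hull verts H e"
    by (simp_all add: verts_fin verts_card verts_indep)
  show "\<forall>u\<in>ver (convex hull verts H e). \<forall>v\<in>ver (convex hull verts H e).
       u \<noteq> v \<longrightarrow> dist u v = sqrt (real (CARD('n)+1) / 2)"
  proof (intro ballI impI)
    fix u v assume u: "u \<in> ver (convex hull verts H e)" and v: "v \<in> ver (convex hull verts H e)" and uv: "u \<noteq> v"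
    have "u \<in> verts H e" "v \<in> verts H e" using u v extreme_point_of_convex_hull by (auto simp: ver_def)
    then obtain k l where "k < CARD('n)+1" "l < CARD('n)+1" "u = vert H e k" "v = vert H e l"
      by (auto simp: verts_def)
    then show "dist u v = sqrt (real (CARD('n)+1) / 2)" using dist_vert uv by blast
  qed
qed

lemma ver_S: "ver (convex hull (verts H e)) \<subseteq> ver unit_cube"
proof
  fix u assume "u \<in> ver (convex hull verts H e)"
  then have "u \<in> verts H e" using extreme_point_of_convex_hull by (auto simp: ver_def)
  then obtain k where "k < CARD('n)+1" "u = vert H e k" by (auto simp: verts_def)
  then show "u \<in> ver unit_cube" unfolding ver_cube using vert_01 by blast
qed

lemma lam_axis_sum: "(\<Sum>j\<in>UNIV. hv H e k j * (1 - 2 * (\<chi> j. if j = i then a else 1/2) $ j)) = hv H e k i * (1 - 2 * a)"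
proof -
  have "(\<Sum>j\<in>UNIV. hv H e k j * (1 - 2 * (\<chi> j. if j = i then a else 1/2) $ j))
      = (\<Sum>j\<in>UNIV. if j = i then hv H e k i * (1 - 2 * a) else 0)"
    by (intro sum.cong refl) auto
  then show ?thesis by simp
qed

lemma axial_S: "axial_diam i (convex hull (verts H e)) = 1"
proof -
  let ?S = "convex hull (verts H e)"
  let ?D = "{dist a b | a b. closed_segment a b \<subseteq> ?S \<and> (\<forall>j. j \<noteq> i \<longrightarrow> a$j = b$j)}"
  define a :: "real^'n" where "a = (\<chi> j. if j = i then 0 else 1/2)"
  define b :: "real^'n" where "b = (\<chi> j. if j = i then 1 else 1/2)"
  have aS: "a \<in> ?S" unfolding S_mem
  proof (intro allI impI)
    fix k assume k: "k < CARD('n)+1"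
    show "0 \<le> lam H e k a" unfolding lam_def a_def lam_axis_sum using hv_pm[OF k, of i] by auto
  qed
  have bS: "b \<in> ?S" unfolding S_mem
  proof (intro allI impI)
    fix k assume k: "k < CARD('n)+1"
    show "0 \<le> lam H e k b" unfolding lam_def b_def lam_axis_sum using hv_pm[OF k, of i] by auto
  qed
  have diff_axis: "x - y = (x$i - y$i) *\<^sub>R axis i 1" if "\<forall>j. j \<noteq> i \<longrightarrow> x$j = y$j" for x y :: "real^'n"
    using that by (auto simp: vec_eq_iff axis_def)
  have "closed_segment a b \<subseteq> ?S" using aS bS by (intro closed_segment_subset convex_convex_hull)
  moreover have "\<forall>j. j \<noteq> i \<longrightarrow> a$j = b$j" by (simp add: a_def b_def)
  moreover have "dist a b = 1"
    using diff_axis[of a b] calculation(2) by (simp add: dist_norm a_def b_def norm_axis_1)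
  ultimately have one: "1 \<in> ?D" by force
  have le: "d \<le> 1" if "d \<in> ?D" for d
  proof -
    obtain x y where xy: "d = dist x y" "closed_segment x y \<subseteq> ?S" "\<forall>j. j \<noteq> i \<longrightarrow> x$j = y$j"
      using \<open>d \<in> ?D\<close> by blast
    have "x \<in> unit_cube" "y \<in> unit_cube" using xy(2) S_cube ends_in_segment by blast+
    then have "0 \<le> x$i" "x$i \<le> 1" "0 \<le> y$i" "y$i \<le> 1" unfolding unit_cube_def by auto
    then have "\<bar>x$i - y$i\<bar> \<le> 1" by (simp add: abs_le_iff)
    then show ?thesis using diff_axis[OF xy(3)] xy(1) by (simp add: dist_norm norm_axis_1)
  qed
  show ?thesis unfolding axial_diam_def
    by (rule cSup_eq_maximum[OF one]) (use le in blast)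
qed


lemma homot_W: "homot (real CARD('n)) (convex hull (verts H e)) = convex hull (gg (real CARD('n)) ` verts H e)"
proof -
  have "homot (real CARD('n)) (convex hull (verts H e)) = gg (real CARD('n)) ` (convex hull (verts H e))"
    unfolding homot_def cog_S gg_def by (intro image_cong refl) (simp add: algebra_simps)
  also have "\<dots> = convex hull (gg (real CARD('n)) ` verts H e)"
    unfolding gg_def by (rule convex_hull_affinity[symmetric])
  finally show ?thesis .
qed

lemma W_indep: "\<not> affine_dependent (gg (real CARD('n)) ` verts H e)"
proof -
  have n0: "real CARD('n) \<noteq> 0" by simp
  have inj: "inj (gg (real CARD('n)))" by (rule gg_inj[OF n0])
  have c: "card (gg (real CARD('n)) ` verts H e) = CARD('n) + 1"
    using card_image[OF inj_on_subset[OF inj subset_UNIV]] verts_card by metis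
  have "aff_dim (gg (real CARD('n)) ` verts H e) = int CARD('n)"
    using aff_dim_affine_hull[of "gg (real CARD('n)) ` verts H e"] aff_hull_gg[OF verts_aff n0] by simp
  then show ?thesis unfolding affine_independent_iff_card using c verts_fin by simp
qed

lemma lam_gg: "lam H e l (gg t y) = 1 / real (CARD('n)+1) + t * (lam H e l y - 1 / real (CARD('n)+1))"
proof -
  have "gg t y = cc + t *\<^sub>R (y - cc)" by (simp add: gg_def algebra_simps)
  then show ?thesis using lam_homot by simp
qed

lemma facet_char:
  assumes F: "F facet_of homot (real CARD('n)) (convex hull (verts H e))"
  shows "\<exists>k<CARD('n)+1. F = gg (real CARD('n)) ` {y. (\<forall>l<CARD('n)+1. 0 \<le> lam H e l y) \<and> lam H e k y = 0}"
proof -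
  let ?g = "gg (real CARD('n))"
  have inj: "inj ?g" by (rule gg_inj) simp
  obtain u where u: "u \<in> ?g ` verts H e" "F = convex hull (?g ` verts H e - {u})"
    using F unfolding homot_W facet_of_convex_hull_affine_independent[OF W_indep] by blast
  obtain k where k: "k < CARD('n)+1" "u = ?g (vert H e k)" using u(1) by (auto simp: verts_def)
  have kV: "vert H e k \<in> verts H e" using k by (simp add: verts_def)
  have "?g ` verts H e - {u} = ?g ` (verts H e - {vert H e k})"
    using k(2) image_set_diff[OF inj, of "verts H e" "{vert H e k}"] by simp
  then have "F = ?g ` (convex hull (verts H e - {vert H e k}))"
    using u(2) unfolding gg_def by (simp add: convex_hull_affinity)
  also have "convex hull (verts H e - {vert H e k}) = {y. (\<forall>l<CARD('n)+1. 0 \<le> lam H e l y) \<and> lam H e k y = 0}"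
    unfolding conv_minus_bc[OF verts_fin verts_indep verts_card kV]
    using bc_verts k(1) by (auto simp: verts_def)
  finally show ?thesis using k(1) by blast
qed

definition uk where "uk k = (\<chi> i. (1 + hv H e k i) / 2)"

lemma uk_ver: "k < CARD('n)+1 \<Longrightarrow> uk k \<in> ver unit_cube"
  unfolding ver_cube uk_def using hv_pm by fastforce

lemma lam_uk: "k < CARD('n)+1 \<Longrightarrow> l < CARD('n)+1 \<Longrightarrow>
  lam H e l (uk k) = (if l = k then 1 - real CARD('n) else 2) / real (CARD('n)+1)"
proof -
  assume k: "k < CARD('n)+1" and l: "l < CARD('n)+1"
  have "(\<Sum>i\<in>UNIV. hv H e l i * (1 - 2 * uk k $ i)) = - (\<Sum>i\<in>UNIV. hv H e l i * hv H e k i)"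
    by (simp add: uk_def sum_negf[symmetric] add_divide_distrib)
  then show ?thesis unfolding lam_def using hv_row[OF l k] by auto
qed

lemma facet_ver:
  assumes k: "k < CARD('n)+1"
  shows "gg (real CARD('n)) ` {y. (\<forall>l<CARD('n)+1. 0 \<le> lam H e l y) \<and> lam H e k y = 0} \<inter> ver unit_cube = {uk k}"
proof (intro set_eqI iffI)
  let ?n = "real CARD('n)"
  let ?m = "real (CARD('n)+1)"
  fix x assume xm: "x \<in> gg ?n ` {y. (\<forall>l<CARD('n)+1. 0 \<le> lam H e l y) \<and> lam H e k y = 0} \<inter> ver unit_cube"
  then have xv: "\<forall>i. x$i = 0 \<or> x$i = 1" using ver_cube by blast
  from xm obtain y where y: "lam H e k y = 0" "x = gg ?n y" by blast
  have "lam H e k x = 1/?m - ?n/?m" using lam_gg[of k ?n y] y by simp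
  then have "(1 + (\<Sum>i\<in>UNIV. hv H e k i * (1 - 2 * x$i))) = 1 - ?n"
    unfolding lam_def by (simp add: field_simps)
  then have s: "(\<Sum>i\<in>UNIV. hv H e k i * (1 - 2 * x$i) + 1) = 0" by (simp add: sum.distrib)
  have nn: "\<forall>i\<in>UNIV. 0 \<le> hv H e k i * (1 - 2 * x$i) + 1"
  proof
    fix i show "0 \<le> hv H e k i * (1 - 2 * x$i) + 1"
      using hv_pm[OF k, of i] xv[rule_format, of i] by auto
  qed
  have z: "hv H e k i * (1 - 2 * x$i) + 1 = 0" for i
    using sum_nonneg_eq_0_iff[of UNIV "\<lambda>i. hv H e k i * (1 - 2 * x$i) + 1"] s nn by simp
  have "x$i = uk k $ i" for i
    using hv_pm[OF k, of i] xv[rule_format, of i] z[of i] by (auto simp: uk_def)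
  then show "x \<in> {uk k}" by (simp add: vec_eq_iff)
next
  let ?n = "real CARD('n)"
  let ?m = "real (CARD('n)+1)"
  fix x assume "x \<in> {uk k}"
  then have x: "x = uk k" by simp
  define y where "y = cc + (1/?n) *\<^sub>R (uk k - cc)"
  have gy: "gg ?n y = uk k" by (simp add: gg_def y_def algebra_simps)
  have ly: "lam H e l y = 1/?m + (1/?n) * (lam H e l (uk k) - 1/?m)" for l
    unfolding y_def by (rule lam_homot)
  have n0: "?n > 0" by simp
  have m_eq: "?m = ?n + 1" by simp
  have "0 \<le> lam H e l y" if l: "l < CARD('n)+1" for l
  proof (cases "l = k")
    case True
    have "lam H e l y = 1/?m + (1/?n) * ((1 - ?n)/?m - 1/?m)" using ly lam_uk[OF k l] True by simp
    also have "\<dots> = 0" unfolding m_eq by (rule aux_zero[OF n0])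
    finally show ?thesis by simp
  next
    case False
    have "lam H e l y = 1/?m + (1/?n) * (2/?m - 1/?m)" using ly lam_uk[OF k l] False by simp
    also have "\<dots> \<ge> 0" unfolding m_eq by (rule aux_pos[OF n0])
    finally show ?thesis .
  qed
  moreover have "lam H e k y = 0"
  proof -
    have "lam H e k y = 1/?m + (1/?n) * ((1 - ?n)/?m - 1/?m)" using ly lam_uk[OF k k] by simp
    also have "\<dots> = 0" unfolding m_eq by (rule aux_zero[OF n0])
    finally show ?thesis .
  qed
  ultimately have "x \<in> gg ?n ` {y. (\<forall>l<CARD('n)+1. 0 \<le> lam H e l y) \<and> lam H e k y = 0}"
    using gy x by (intro image_eqI[of _ _ y]) auto
  then show "x \<in> gg ?n ` {y. (\<forall>l<CARD('n)+1. 0 \<le> lam H e l y) \<and> lam H e k y = 0} \<inter> ver unit_cube"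
  proof (rule IntI)
    show "x \<in> ver unit_cube" unfolding x by (rule uk_ver[OF k])
  qed
qed

lemma facets_S:
  assumes F: "F facet_of homot (real CARD('n)) (convex hull (verts H e))"
  shows "card (F \<inter> ver unit_cube) = 1" and "F \<inter> unit_cube \<noteq> {}"
proof -
  obtain k where k: "k < CARD('n)+1"
    and Fk: "F = gg (real CARD('n)) ` {y. (\<forall>l<CARD('n)+1. 0 \<le> lam H e l y) \<and> lam H e k y = 0}"
    using facet_char[OF F] by blast
  have eq: "F \<inter> ver unit_cube = {uk k}" using facet_ver[OF k] Fk by simp
  then show "card (F \<inter> ver unit_cube) = 1" by simp
  have "ver (unit_cube :: (real^'n) set) \<subseteq> unit_cube" by (auto simp: ver_def extreme_point_of_def)
  then show "F \<inter> unit_cube \<noteq> {}" using eq by blast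
qed

end


theorem theorem2p1:
  assumes "hadamard_number (CARD('n) + 1)"
  shows "\<exists>S :: (real ^ 'n) set.
     regular_simplex S \<and> S \<subseteq> unit_cube \<and>
     ver S \<subseteq> ver (unit_cube :: (real ^ 'n) set) \<and>
     xi_n TYPE('n) = xi_simplex S \<and> xi_simplex S = alpha_simplex S \<and>
     alpha_simplex S = real CARD('n) \<and>
     (\<forall>i. axial_diam i S = 1) \<and>
     circumscribed (homot (real CARD('n)) S) (unit_cube :: (real ^ 'n) set) \<and>
     (\<forall>F. F facet_of homot (real CARD('n)) S \<longrightarrow>
        card (F \<inter> ver (unit_cube :: (real ^ 'n) set)) = 1)"
proof -
  obtain H :: "nat \<Rightarrow> nat \<Rightarrow> real" where
    Hpm: "\<forall>i<CARD('n)+1. \<forall>j<CARD('n)+1. H i j = 1 \<or> H i j = -1"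
    and Hrow: "\<forall>i<CARD('n)+1. \<forall>k<CARD('n)+1. (\<Sum>j<CARD('n)+1. H i j * H k j) = (if i = k then real (CARD('n)+1) else 0)"
    and Hcol: "\<forall>i<CARD('n)+1. \<forall>k<CARD('n)+1. (\<Sum>j<CARD('n)+1. H j i * H j k) = (if i = k then real (CARD('n)+1) else 0)"
    using assms unfolding hadamard_number_def by blast
  obtain e :: "'n \<Rightarrow> nat" where ebij: "bij_betw e UNIV {0..<CARD('n)}"
    using ex_bij_betw_finite_nat[of "UNIV :: 'n set"] by auto
  note hyps = Hpm Hrow Hcol ebij
  define S where "S = convex hull (verts H e)"
  note fin = verts_fin[OF hyps] and ind = verts_indep[OF hyps] and crd = verts_card[OF hyps]
  have Ssub: "S \<subseteq> unit_cube" unfolding S_def by (rule S_cube[OF hyps])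
  let ?n = "real CARD('n)"
  have n1: "1 \<le> ?n" by simp
  have Qsub: "unit_cube \<subseteq> homot ?n S" unfolding S_def by (rule cube_sub_homot[OF hyps])
  have xiS: "xi_simplex S = ?n"
  proof (rule antisym)
    show "xi_simplex S \<le> ?n" unfolding xi_simplex_def xi_rel_def
      by (rule cInf_lower) (use n1 Qsub in \<open>auto intro: bdd_belowI[of _ 1]\<close>)
    show "?n \<le> xi_simplex S" unfolding S_def
      by (rule xi_ge[OF fin ind crd S_cube[OF hyps]])
  qed
  have alS: "alpha_simplex S = ?n" unfolding alpha_simplex_def alpha_rel_def
  proof (rule cInf_eq_minimum)
    show "?n \<in> {\<sigma>. 0 < \<sigma> \<and> (\<exists>t. unit_cube \<subseteq> (\<lambda>x. t + x) ` homot \<sigma> S)}"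
      using Qsub n1 by (auto intro!: exI[of _ 0])
    fix s assume "s \<in> {\<sigma>. 0 < \<sigma> \<and> (\<exists>t. unit_cube \<subseteq> (\<lambda>x. t + x) ` homot \<sigma> S)}"
    then obtain t where s: "0 < s" and t: "unit_cube \<subseteq> (\<lambda>x. t + x) ` homot s S" by blast
    have "(\<lambda>x. t + x) ` homot s S = (\<lambda>x. (t + (center_of_gravity S - s *\<^sub>R center_of_gravity S)) + s *\<^sub>R x) ` S"
      unfolding homot_affine[OF fin ind crd] image_image by (simp add: add.assoc)
    then show "?n \<le> s" using lower_bound[OF fin ind crd S_cube[OF hyps] s] t unfolding S_def by simp
  qed
  have xin: "xi_n TYPE('n) = ?n" unfolding xi_n_def
  proof (rule cInf_eq_minimum)
    show "?n \<in> {xi_simplex S' |S' :: (real^'n) set. nondeg_simplex S' \<and> S' \<subseteq> unit_cube}"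
    proof -
      have "nondeg_simplex S" unfolding nondeg_simplex_def S_def using fin ind crd by blast
      then show ?thesis using xiS Ssub by (intro CollectI exI[of _ S]) simp
    qed
    fix x assume "x \<in> {xi_simplex S' |S' :: (real^'n) set. nondeg_simplex S' \<and> S' \<subseteq> unit_cube}"
    then obtain V :: "(real^'n) set" where V: "finite V" "card V = CARD('n) + 1" "\<not> affine_dependent V"
      and x: "x = xi_simplex (convex hull V)" and sub: "convex hull V \<subseteq> unit_cube"
      unfolding nondeg_simplex_def by blast
    show "?n \<le> x" unfolding x by (rule xi_ge[OF V(1,3,2) sub])
  qed
  have "regular_simplex S \<and> S \<subseteq> unit_cube \<and>
     ver S \<subseteq> ver (unit_cube :: (real ^ 'n) set) \<and>
     xi_n TYPE('n) = xi_simplex S \<and> xi_simplex S = alpha_simplex S \<and>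
     alpha_simplex S = real CARD('n) \<and>
     (\<forall>i. axial_diam i S = 1) \<and>
     circumscribed (homot (real CARD('n)) S) (unit_cube :: (real ^ 'n) set) \<and>
     (\<forall>F. F facet_of homot (real CARD('n)) S \<longrightarrow>
        card (F \<inter> ver (unit_cube :: (real ^ 'n) set)) = 1)"
    unfolding circumscribed_def
    using regular_S[OF hyps] Ssub ver_S[OF hyps] xin xiS alS axial_S[OF hyps] Qsub
      facets_S[OF hyps] unfolding S_def by auto
  then show ?thesis by blast
qed


end
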